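(* Any two elements of $B^{(k,r)}$ are intertwined.
   Context: Let $P=\mathbb Z^n$. For $\lambda\in P$, $\rho(\lambda)$ is the unique permutation of $(\frac{n-1}2,\dots,-\frac{n-1}2)$ with $\rho(\lambda)_i>\rho(\lambda)_j$ iff $\lambda_i>\lambda_j$ or ($\lambda_i=\lambda_j$, $i<j$). $\omega\lambda=(\lambda_2,\dots,\lambda_n,\lambda_1+1)$; $s_i\lambda$ swaps $\lambda_i,\lambda_{i+1}$. Fix $1\le k\le n-1$, $r\ge2$, $g=\gcd(k+1,r-1)$, $\tau=e^{2\pi\sqrt{-1}/(r-1)}$, specialization $(\ast)$: $t=u^{(r-1)/g}$, $q=\tau u^{-(k+1)/g}$. $u_\lambda(f)=f(t^{-\rho(\lambda)_1}q^{-\lambda_1},\dots,t^{-\rho(\lambda)_n}q^{-\lambda_n})$. "Intertwined" is the equivalence relation on $P$ generated by $\lambda\sim\omega\lambda$ and by $\lambda\sim s_i\lambda$ whenever $s_i\lambda\ne\lambda$ and, at $(\ast)$, $u_\lambda(x_i/x_{i+1})\notin\{1,t,t^{-1}\}$. For $a\ge2,b\ge1$, $(i,j)$ is a neighborhood of type $(a,b)$ in $\lambda$ if $\rho(\lambda)_i-\rho(\lambda)_j=a-1$ and either $\lambda_i-\lambda_j\le b-1$, or $\lambda_i-\lambda_j=b$ and $j<i$. $B^{(k,r)}$ is the set of $\lambda\in P$ having no neighborhood of type $(k+1,r-1)$. *)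

theory Defs
  imports Complex_Main
begin

text \<open>Weights lambda in P = Z^n are int lists of length n; positions are 0-based,
  so the paper's index i (1..n) is position i-1 here.\<close>

definition rank_pos :: "int list \<Rightarrow> nat \<Rightarrow> nat" where
  "rank_pos lam i = card {j. j < length lam \<and>
      (lam ! j > lam ! i \<or> (lam ! j = lam ! i \<and> j < i))}"

text \<open>rho(lambda)_i: the unique permutation of ((n-1)/2, ..., -(n-1)/2) ordered as in the paper;
  the entry at position i is (n-1)/2 minus the number of positions ranked above i.\<close>
definition rho :: "int list \<Rightarrow> nat \<Rightarrow> rat" where
  "rho lam i = (of_nat (length lam) - 1) / 2 - of_nat (rank_pos lam i)"

definition omega :: "int list \<Rightarrow> int list" where
  "omega lam = tl lam @ [hd lam + 1]"

definition swap_at :: "nat \<Rightarrow> int list \<Rightarrow> int list" where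
  "swap_at i lam = lam[i := lam ! Suc i, Suc i := lam ! i]"

text \<open>Monomials c * u^e (c a nonzero complex number, e a rational exponent) in the
  indeterminate u, represented as pairs (c, e); two such monomials are equal iff
  the pairs are equal.\<close>
type_synonym mono = "complex \<times> rat"

definition mono_mult :: "mono \<Rightarrow> mono \<Rightarrow> mono" where
  "mono_mult a b = (fst a * fst b, snd a + snd b)"

definition mono_div :: "mono \<Rightarrow> mono \<Rightarrow> mono" where
  "mono_div a b = (fst a / fst b, snd a - snd b)"

definition gg :: "nat \<Rightarrow> nat \<Rightarrow> nat" where
  "gg k r = gcd (k + 1) (r - 1)"

definition tau :: "nat \<Rightarrow> complex" where
  "tau r = cis (2 * pi / real (r - 1))"

text \<open>Specialization: t = u^((r-1)/g), so t^s = u^(s(r-1)/g).\<close>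
definition t_pow :: "nat \<Rightarrow> nat \<Rightarrow> rat \<Rightarrow> mono" where
  "t_pow k r s = (1, s * of_nat (r - 1) / of_nat (gg k r))"

text \<open>Specialization: q = tau * u^(-(k+1)/g), so q^m = tau^m u^(-m(k+1)/g).\<close>
definition q_pow :: "nat \<Rightarrow> nat \<Rightarrow> int \<Rightarrow> mono" where
  "q_pow k r m = (tau r powi m, - of_int m * of_nat (k + 1) / of_nat (gg k r))"

definition u_x :: "nat \<Rightarrow> nat \<Rightarrow> int list \<Rightarrow> nat \<Rightarrow> mono" where
  "u_x k r lam i = mono_mult (t_pow k r (- rho lam i)) (q_pow k r (- (lam ! i)))"

definition u_ratio :: "nat \<Rightarrow> nat \<Rightarrow> int list \<Rightarrow> nat \<Rightarrow> mono" where
  "u_ratio k r lam i = mono_div (u_x k r lam i) (u_x k r lam (Suc i))"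

inductive intertwin_step :: "nat \<Rightarrow> nat \<Rightarrow> int list \<Rightarrow> int list \<Rightarrow> bool"
  for k r where
  omega_step: "lam \<noteq> [] \<Longrightarrow> intertwin_step k r lam (omega lam)"
| swap_step: "Suc i < length lam \<Longrightarrow> swap_at i lam \<noteq> lam \<Longrightarrow>
     u_ratio k r lam i \<notin> {(1, 0), t_pow k r 1, t_pow k r (-1)} \<Longrightarrow>
     intertwin_step k r lam (swap_at i lam)"

definition intertwined :: "nat \<Rightarrow> nat \<Rightarrow> int list \<Rightarrow> int list \<Rightarrow> bool" where
  "intertwined k r = equivclp (intertwin_step k r)"

definition neighborhood :: "nat \<Rightarrow> nat \<Rightarrow> int list \<Rightarrow> nat \<Rightarrow> nat \<Rightarrow> bool" where
  "neighborhood a b lam i j \<longleftrightarrow> i < length lam \<and> j < length lam \<and>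
     rho lam i - rho lam j = of_nat a - 1 \<and>
     (lam ! i - lam ! j \<le> int b - 1 \<or> (lam ! i - lam ! j = int b \<and> j < i))"

definition B :: "nat \<Rightarrow> nat \<Rightarrow> nat \<Rightarrow> int list set" where
  "B n k r = {lam. length lam = n \<and> \<not> (\<exists>i j. neighborhood (k + 1) (r - 1) lam i j)}"

end

theory Submission
  imports Defs "HOL-Library.Multiset"
begin

definition prec :: "int list \<Rightarrow> nat \<Rightarrow> nat \<Rightarrow> bool" where
  "prec lam j i \<longleftrightarrow> lam ! j > lam ! i \<or> (lam ! j = lam ! i \<and> j < i)"

lemma rank_def2: "rank_pos lam i = card {j. j < length lam \<and> prec lam j i}"
  unfolding rank_pos_def prec_def by simp

lemma prec_trans: "prec lam a b \<Longrightarrow> prec lam b c \<Longrightarrow> prec lam a c"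
  unfolding prec_def by auto

lemma prec_irrefl: "\<not> prec lam a a"
  unfolding prec_def by auto

lemma prec_total: "a \<noteq> b \<Longrightarrow> prec lam a b \<or> prec lam b a"
  unfolding prec_def by auto

lemma rank_mono:
  assumes "prec lam x y" "x < length lam" "y < length lam"
  shows "rank_pos lam x < rank_pos lam y"
proof -
  have "{j. j < length lam \<and> prec lam j x} \<subset> {j. j < length lam \<and> prec lam j y}"
    using assms prec_trans[of lam _ x y] prec_irrefl[of lam x] by auto
  then show ?thesis unfolding rank_def2 by (intro psubset_card_mono) auto
qed

lemma rank_less_iff:
  assumes "x < length lam" "y < length lam"
  shows "rank_pos lam x < rank_pos lam y \<longleftrightarrow> prec lam x y"
  using rank_mono[OF _ assms] rank_mono[of lam y x] assms prec_total[of x y lam]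
  by (metis less_asym less_irrefl)

lemma rank_inj:
  assumes "x < length lam" "y < length lam" "rank_pos lam x = rank_pos lam y"
  shows "x = y"
  using rank_mono[of lam x y] rank_mono[of lam y x] assms prec_total[of x y lam] by force

lemma rank_bound:
  assumes "x < length lam" shows "rank_pos lam x < length lam"
proof -
  have "{j. j < length lam \<and> prec lam j x} \<subseteq> {..<length lam} - {x}"
    using prec_irrefl[of lam x] by auto
  then have "rank_pos lam x \<le> card ({..<length lam} - {x})"
    unfolding rank_def2 by (intro card_mono) auto
  then show ?thesis using assms by simp
qed

lemma rank_surj:
  assumes "q < length lam" shows "\<exists>x < length lam. rank_pos lam x = q"
proof -
  have "rank_pos lam ` {..<length lam} = {..<length lam}"
    by (rule endo_inj_surj) (auto intro: rank_bound inj_onI rank_inj)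
  then show ?thesis using assms by (metis imageE lessThan_iff)
qed

lemma rank_transfer:
  assumes bij: "bij_betw \<pi> {..<length lam} {..<length lam'}"
    and pr: "\<And>a b. a < length lam \<Longrightarrow> b < length lam \<Longrightarrow> prec lam' (\<pi> a) (\<pi> b) \<longleftrightarrow> prec lam a b"
    and x: "x < length lam"
  shows "rank_pos lam' (\<pi> x) = rank_pos lam x"
proof -
  have "{j. j < length lam' \<and> prec lam' j (\<pi> x)} = \<pi> ` {j. j < length lam \<and> prec lam j x}"
  proof safe
    fix j assume j: "j < length lam'" "prec lam' j (\<pi> x)"
    then obtain a where a: "a < length lam" "j = \<pi> a" using bij unfolding bij_betw_def
      by (metis imageE lessThan_iff)
    then show "j \<in> \<pi> ` {j. j < length lam \<and> prec lam j x}" using pr[of a x] j x by auto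
  next
    fix a assume "a < length lam" "prec lam a x"
    then show "\<pi> a < length lam'" "prec lam' (\<pi> a) (\<pi> x)"
      using bij pr[of a x] x unfolding bij_betw_def by auto
  qed
  moreover have "inj_on \<pi> {j. j < length lam \<and> prec lam j x}"
    using bij unfolding bij_betw_def by (auto intro: inj_on_subset)
  ultimately show ?thesis unfolding rank_def2 by (simp add: card_image)
qed

lemma rho_diff: "rho lam i - rho lam j = of_nat (rank_pos lam j) - of_nat (rank_pos lam i)"
  unfolding rho_def by simp

definition nb :: "nat \<Rightarrow> nat \<Rightarrow> int list \<Rightarrow> nat \<Rightarrow> nat \<Rightarrow> bool" where
  "nb k r lam i j \<longleftrightarrow> i < length lam \<and> j < length lam \<and>
     rank_pos lam j = rank_pos lam i + k \<and>
     (lam ! i - lam ! j \<le> int r - 2 \<or> (lam ! i - lam ! j = int r - 1 \<and> j < i))"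

lemma nb_iff: "2 \<le> r \<Longrightarrow> neighborhood (k + 1) (r - 1) lam i j \<longleftrightarrow> nb k r lam i j"
proof -
  assume r: "2 \<le> r"
  have "rho lam i - rho lam j = of_nat (k + 1) - 1 \<longleftrightarrow> rank_pos lam j = rank_pos lam i + k"
  proof -
    have "rho lam i - rho lam j = of_nat (k + 1) - 1 \<longleftrightarrow>
          (of_nat (rank_pos lam j) :: rat) = of_nat (rank_pos lam i + k)"
      unfolding rho_diff by (simp add: algebra_simps)
    also have "\<dots> \<longleftrightarrow> rank_pos lam j = rank_pos lam i + k" by (simp only: of_nat_eq_iff)
    finally show ?thesis .
  qed
  moreover have "int (r - 1) = int r - 1" using r by simp
  ultimately show ?thesis unfolding neighborhood_def nb_def by auto
qed

lemma B_iff: "2 \<le> r \<Longrightarrow> lam \<in> B n k r \<longleftrightarrow> length lam = n \<and> (\<forall>i j. \<not> nb k r lam i j)"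
  unfolding B_def using nb_iff by auto


lemma noB_base:
  assumes noB: "\<forall>i j. \<not> nb k r lam i j" and k: "1 \<le> k"
    and xy: "x < length lam" "y < length lam" "rank_pos lam y = rank_pos lam x + k"
  shows "lam ! x - lam ! y \<ge> int r - 1 \<and> (lam ! x - lam ! y = int r - 1 \<longrightarrow> x < y)"
proof -
  have "x \<noteq> y" using xy k by auto
  then show ?thesis using noB[rule_format, of x y] xy unfolding nb_def by auto
qed

lemma val_mono:
  assumes "z < length lam" "y < length lam" "rank_pos lam z \<le> rank_pos lam y"
  shows "lam ! z \<ge> lam ! y \<and> (lam ! z = lam ! y \<longrightarrow> z \<le> y)"
proof (cases "rank_pos lam z = rank_pos lam y")
  case True
  then show ?thesis using rank_inj assms by blast
next
  case False
  then have "prec lam z y" using rank_less_iff assms by (metis le_neq_implies_less)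
  then show ?thesis unfolding prec_def by auto
qed

lemma chain:
  assumes noB: "\<forall>i j. \<not> nb k r lam i j" and k: "1 \<le> k"
  shows "x < length lam \<Longrightarrow> y < length lam \<Longrightarrow> rank_pos lam y \<ge> rank_pos lam x + Suc m * k \<Longrightarrow>
    lam ! x - lam ! y \<ge> int (Suc m) * (int r - 1) \<and> (lam ! x - lam ! y = int (Suc m) * (int r - 1) \<longrightarrow> x < y)"
proof (induction m arbitrary: x)
  case 0
  obtain z where z: "z < length lam" "rank_pos lam z = rank_pos lam x + k"
    using rank_surj[of "rank_pos lam x + k" lam] "0.prems" rank_bound[of y lam] by auto
  have 1: "lam ! x - lam ! z \<ge> int r - 1 \<and> (lam ! x - lam ! z = int r - 1 \<longrightarrow> x < z)"
    using noB_base[OF noB k "0.prems"(1) z(1) z(2)] .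
  have 2: "lam ! z \<ge> lam ! y \<and> (lam ! z = lam ! y \<longrightarrow> z \<le> y)"
    using val_mono[OF z(1) "0.prems"(2)] z "0.prems" by auto
  show ?case using 1 2 by auto
next
  case (Suc m)
  obtain z where z: "z < length lam" "rank_pos lam z = rank_pos lam x + k"
    using rank_surj[of "rank_pos lam x + k" lam] Suc.prems rank_bound[of y lam] by auto
  have 1: "lam ! x - lam ! z \<ge> int r - 1 \<and> (lam ! x - lam ! z = int r - 1 \<longrightarrow> x < z)"
    using noB_base[OF noB k Suc.prems(1) z(1) z(2)] .
  have 2: "lam ! z - lam ! y \<ge> int (Suc m) * (int r - 1) \<and> (lam ! z - lam ! y = int (Suc m) * (int r - 1) \<longrightarrow> z < y)"
    using Suc.IH[OF z(1) Suc.prems(2)] z Suc.prems by auto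
  show ?case using 1 2 by (auto simp: algebra_simps)
qed


lemma omega_len: "lam \<noteq> [] \<Longrightarrow> length (omega lam) = length lam"
  unfolding omega_def by simp

lemma omega_nth: "lam \<noteq> [] \<Longrightarrow> a < length lam \<Longrightarrow>
   omega lam ! a = (if a = length lam - 1 then lam ! 0 + 1 else lam ! Suc a)"
  unfolding omega_def by (cases lam) (auto simp: nth_append)

lemma bij_endo: "inj_on f {..<n} \<Longrightarrow> f ` {..<n} \<subseteq> {..<(n::nat)} \<Longrightarrow> bij_betw f {..<n} {..<n}"
  unfolding bij_betw_def using endo_inj_surj by blast

lemma omega_B:
  assumes r: "2 \<le> r" and lam: "lam \<in> B n k r" and ne: "lam \<noteq> []"
  shows "omega lam \<in> B n k r"
proof -
  let ?w = "omega lam"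
  define n' where "n' = length lam"
  define \<sigma> where "\<sigma> a = (if a = n' - 1 then 0 else Suc a)" for a
  have len: "length ?w = n'" using omega_len[OF ne] n'_def by simp
  have n'pos: "n' > 0" using ne n'_def by simp
  have wn: "?w ! a = (if a = n' - 1 then lam ! 0 + 1 else lam ! Suc a)" if "a < n'" for a
    using omega_nth[OF ne] that n'_def by simp
  have bij: "bij_betw \<sigma> {..<length ?w} {..<length lam}"
    unfolding len n'_def[symmetric]
    by (rule bij_endo) (auto simp: \<sigma>_def inj_on_def n'pos split: if_splits)
  have pr: "prec lam (\<sigma> a) (\<sigma> b) \<longleftrightarrow> prec ?w a b" if "a < length ?w" "b < length ?w" for a b
    using that unfolding len prec_def \<sigma>_def using wn[of a] wn[of b] by auto
  have rk: "rank_pos lam (\<sigma> a) = rank_pos ?w a" if "a < length ?w" for a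
    by (rule rank_transfer[OF bij pr that])
  have noB: "\<forall>i j. \<not> nb k r lam i j" using B_iff[OF r] lam by auto
  have "\<not> nb k r ?w i j" for i j
  proof
    assume h: "nb k r ?w i j"
    then have ij: "i < n'" "j < n'" "rank_pos ?w j = rank_pos ?w i + k"
      and c: "?w ! i - ?w ! j \<le> int r - 2 \<or> (?w ! i - ?w ! j = int r - 1 \<and> j < i)"
      unfolding nb_def len by auto
    have rk2: "rank_pos lam (\<sigma> j) = rank_pos lam (\<sigma> i) + k" using rk ij len by auto
    have lt: "\<sigma> i < n'" "\<sigma> j < n'" using ij n'pos by (auto simp: \<sigma>_def)
    have "lam ! (\<sigma> i) - lam ! (\<sigma> j) \<le> int r - 2 \<or> (lam ! (\<sigma> i) - lam ! (\<sigma> j) = int r - 1 \<and> \<sigma> j < \<sigma> i)"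
      using c wn[OF ij(1)] wn[OF ij(2)] ij unfolding \<sigma>_def by (auto split: if_splits)
    then have "nb k r lam (\<sigma> i) (\<sigma> j)" unfolding nb_def using lt rk2 n'_def by auto
    then show False using noB by auto
  qed
  then show ?thesis using B_iff[OF r] lam len n'_def by auto
qed

lemma swap_len: "length (swap_at i lam) = length lam"
  unfolding swap_at_def by simp

lemma swap_nth: "Suc i < length lam \<Longrightarrow> a < length lam \<Longrightarrow>
   swap_at i lam ! a = lam ! (if a = i then Suc i else if a = Suc i then i else a)"
  unfolding swap_at_def by (auto simp: nth_list_update)

lemma swap_B:
  assumes r: "2 \<le> r" and lam: "lam \<in> B n k r" and i: "Suc i < length lam"
    and asc: "lam ! i < lam ! Suc i"
  shows "swap_at i lam \<in> B n k r"
proof -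
  let ?w = "swap_at i lam"
  define n' where "n' = length lam"
  define \<sigma> where "\<sigma> a = (if a = i then Suc i else if a = Suc i then i else a)" for a
  have len: "length ?w = n'" using swap_len n'_def by simp
  have wn: "?w ! a = lam ! (\<sigma> a)" if "a < n'" for a
    using swap_nth[OF i] that n'_def \<sigma>_def by simp
  have bij: "bij_betw \<sigma> {..<length ?w} {..<length lam}"
    unfolding len n'_def[symmetric] using i n'_def
    by (intro bij_endo) (auto simp: \<sigma>_def inj_on_def split: if_splits)
  have pr: "prec lam (\<sigma> a) (\<sigma> b) \<longleftrightarrow> prec ?w a b" if "a < length ?w" "b < length ?w" for a b
    using that asc unfolding len prec_def using wn[of a] wn[of b] by (auto simp: \<sigma>_def)
  have rk: "rank_pos lam (\<sigma> a) = rank_pos ?w a" if "a < length ?w" for a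
    by (rule rank_transfer[OF bij pr that])
  have noB: "\<forall>i j. \<not> nb k r lam i j" using B_iff[OF r] lam by auto
  have "\<not> nb k r ?w x y" for x y
  proof
    assume h: "nb k r ?w x y"
    then have ij: "x < n'" "y < n'" "rank_pos ?w y = rank_pos ?w x + k"
      and c: "?w ! x - ?w ! y \<le> int r - 2 \<or> (?w ! x - ?w ! y = int r - 1 \<and> y < x)"
      unfolding nb_def len by auto
    have rk2: "rank_pos lam (\<sigma> y) = rank_pos lam (\<sigma> x) + k" using rk ij len by auto
    have lt: "\<sigma> x < n'" "\<sigma> y < n'" using ij i n'_def by (auto simp: \<sigma>_def)
    have "\<not> (y = i \<and> x = Suc i)"
    proof
      assume yx: "y = i \<and> x = Suc i"
      have "rank_pos ?w x \<le> rank_pos ?w y" using ij by simp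
      moreover have "prec ?w y x" using yx wn ij asc unfolding prec_def \<sigma>_def by auto
      then have "rank_pos ?w y < rank_pos ?w x" using rank_mono[of ?w y x] ij len by simp
      ultimately show False by simp
    qed
    then have "lam ! (\<sigma> x) - lam ! (\<sigma> y) \<le> int r - 2 \<or> (lam ! (\<sigma> x) - lam ! (\<sigma> y) = int r - 1 \<and> \<sigma> y < \<sigma> x)"
      using c wn[OF ij(1)] wn[OF ij(2)] unfolding \<sigma>_def by (auto split: if_splits)
    then have "nb k r lam (\<sigma> x) (\<sigma> y)" unfolding nb_def using lt rk2 n'_def by auto
    then show False using noB by auto
  qed
  then show ?thesis using B_iff[OF r] lam len n'_def by auto
qed


lemma tau_eq:
  assumes r: "2 \<le> r" and h: "tau r powi a = tau r powi b"
  shows "\<exists>N::int. b - a = N * (int r - 1)"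
proof -
  define \<theta> where "\<theta> = 2 * pi / real (r - 1)"
  have "cis (of_int a * \<theta>) = cis (of_int b * \<theta>)" using h unfolding tau_def \<theta>_def cis_power_int by simp
  then have "cis (of_int b * \<theta> - of_int a * \<theta>) = 1"
    by (metis cis_divide divide_self_if cis_neq_zero)
  then have "Re (cis (of_int b * \<theta> - of_int a * \<theta>)) = 1" by simp
  then have "cos (of_int (b - a) * \<theta>) = 1" by (simp add: left_diff_distrib)
  then obtain N :: int where N: "of_int (b - a) * \<theta> = of_int N * 2 * pi" using cos_one_2pi_int by blast
  have rr: "real (r - 1) > 0" using r by simp
  have "of_int (b - a) * (2 * pi) = (of_int N * real (r - 1)) * (2 * pi)"
  proof -
    have "of_int (b - a) * (2 * pi) = (of_int (b - a) * \<theta>) * real (r - 1)"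
      unfolding \<theta>_def using rr by simp
    also have "\<dots> = (of_int N * real (r - 1)) * (2 * pi)" unfolding N by simp
    finally show ?thesis .
  qed
  then have "of_int (b - a) = (of_int N * real (r - 1) :: real)"
    using pi_gt_zero by (metis mult_cancel_right pi_neq_zero zero_neq_numeral mult_eq_0_iff)
  then have "b - a = N * int (r - 1)" by (metis of_int_eq_iff of_int_mult of_int_of_nat_eq)
  then show ?thesis using r by (auto simp: of_nat_diff)
qed

lemma fst_u_x: "fst (u_x k r lam i) = tau r powi (- (lam ! i))"
  unfolding u_x_def mono_mult_def t_pow_def q_pow_def by simp

lemma snd_u_x: "snd (u_x k r lam i) =
   (- rho lam i * of_nat (r - 1) + of_int (lam ! i) * of_nat (k + 1)) / of_nat (gg k r)"
  unfolding u_x_def mono_mult_def t_pow_def q_pow_def by (simp add: add_divide_distrib diff_divide_distrib)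

lemma not_blocked:
  assumes r: "2 \<le> r" and k: "1 \<le> k" and lam: "lam \<in> B n k r" and i: "Suc i < length lam"
    and asc: "lam ! i < lam ! Suc i"
  shows "u_ratio k r lam i \<notin> {(1, 0), t_pow k r 1, t_pow k r (-1)}"
proof
  assume h: "u_ratio k r lam i \<in> {(1, 0), t_pow k r 1, t_pow k r (-1)}"
  define g where "g = gg k r"
  have gpos: "g > 0" unfolding g_def gg_def using r by simp
  have "u_ratio k r lam i = (1, 0 * of_nat (r - 1) / of_nat g) \<or> u_ratio k r lam i = (1, 1 * of_nat (r - 1) / of_nat g)
     \<or> u_ratio k r lam i = (1, (-1) * of_nat (r - 1) / of_nat g)"
    using h unfolding t_pow_def g_def by auto
  then obtain e :: rat where e: "e \<in> {0, 1, -1}" "u_ratio k r lam i = (1, e * of_nat (r - 1) / of_nat g)"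
    by blast
  define li where "li = lam ! i"
  define lj where "lj = lam ! Suc i"
  have tz: "tau r \<noteq> 0" unfolding tau_def by simp
  have f: "tau r powi (- li) / tau r powi (- lj) = 1"
    using e(2) unfolding u_ratio_def mono_div_def fst_u_x li_def lj_def
    by (metis fst_conv)
  then have "tau r powi (- lj) = tau r powi (- li)" using tz
    by (metis divide_eq_1_iff power_int_eq_0_iff)
  then obtain N :: int where N: "- li - - lj = N * (int r - 1)" using tau_eq[OF r] by blast
  have Dpos: "lj - li > 0" using asc li_def lj_def by simp
  have r1: "int r - 1 > 0" using r by simp
  have "N * (int r - 1) > 0" using N Dpos by simp
  then have Npos: "N \<ge> 1" using r1 by (simp add: zero_less_mult_iff)
  define Ri where "Ri = rank_pos lam i"
  define Rj where "Rj = rank_pos lam (Suc i)"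
  have "snd (u_ratio k r lam i) = e * of_nat (r - 1) / of_nat g" using e(2) by simp
  then have "((- rho lam i * of_nat (r - 1) + of_int li * of_nat (k + 1))
      - (- rho lam (Suc i) * of_nat (r - 1) + of_int lj * of_nat (k + 1))) / of_nat g
      = e * of_nat (r - 1) / of_nat g"
    unfolding u_ratio_def mono_div_def snd_u_x li_def lj_def g_def by (simp add: diff_divide_distrib)
  then have "(- rho lam i * of_nat (r - 1) + of_int li * of_nat (k + 1))
      - (- rho lam (Suc i) * of_nat (r - 1) + of_int lj * of_nat (k + 1))
      = e * of_nat (r - 1)" using gpos by simp
  then have X: "(- (rho lam i - rho lam (Suc i))) * of_nat (r - 1) - of_int (lj - li) * of_nat (k + 1)
      = e * (of_nat (r - 1) :: rat)"
    by (simp add: algebra_simps)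
  have NN: "lj - li = N * (int r - 1)" using N by simp
  have "(of_nat Ri - of_nat Rj) * of_nat (r - 1) - of_int (N * (int r - 1)) * of_nat (k + 1)
      = e * (of_nat (r - 1) :: rat)"
    using X[unfolded NN rho_diff] unfolding Ri_def Rj_def by simp
  moreover have "(of_nat (r - 1) :: rat) = of_int (int r - 1)" using r by (simp add: of_nat_diff)
  ultimately have "(of_nat Ri - of_nat Rj - of_int N * of_nat (k + 1) - e) * (of_int (int r - 1) :: rat) = 0"
    by (simp add: algebra_simps)
  then have eq: "(of_nat Ri - of_nat Rj - of_int N * of_nat (k + 1) :: rat) = e" using r1 by simp
  have "int Ri - int Rj - N * int (k + 1) \<ge> -1"
  proof -
    have "(of_int (int Ri - int Rj - N * int (k + 1)) :: rat) \<ge> -1" using eq e(1) by auto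
    then show ?thesis by linarith
  qed
  then have ge: "int Ri \<ge> int Rj + N * int k" using Npos by (simp add: algebra_simps)
  define m where "m = nat N - 1"
  have m: "N = int (Suc m)" using Npos unfolding m_def by simp
  have "int Ri \<ge> int (Rj + Suc m * k)" using ge m by (simp add: algebra_simps)
  then have "Ri \<ge> Rj + Suc m * k" by linarith
  then have "lam ! Suc i - lam ! i \<ge> int (Suc m) * (int r - 1) \<and> (lam ! Suc i - lam ! i = int (Suc m) * (int r - 1) \<longrightarrow> Suc i < i)"
    using chain[of k r lam "Suc i" i m] B_iff[OF r] lam k i Ri_def Rj_def by auto
  then show False using N m li_def lj_def by (simp add: algebra_simps)
qed


definition dominant :: "int list \<Rightarrow> bool" where
  "dominant v \<longleftrightarrow> (\<forall>i. Suc i < length v \<longrightarrow> v ! Suc i \<le> v ! i)"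

definition meas :: "int \<Rightarrow> int list \<Rightarrow> int" where
  "meas c lam = (\<Sum>x<length lam. int x * (lam ! x - c))"

lemma swap_measure:
  assumes i: "Suc i < length lam"
  shows "meas c (swap_at i lam) = meas c lam - (lam ! Suc i - lam ! i)"
proof -
  define f where "f x = int x * (lam ! x - c)" for x
  define f' where "f' x = int x * (swap_at i lam ! x - c)" for x
  define A where "A = {..<length lam} - {i} - {Suc i}"
  have fA: "finite A" unfolding A_def by simp
  have eqA: "sum f' A = sum f A"
    by (rule sum.cong) (auto simp: A_def f_def f'_def swap_nth[OF i])
  have s1: "sum g {..<length lam} = g i + (g (Suc i) + sum g A)" for g :: "nat \<Rightarrow> int"
  proof -
    have "sum g {..<length lam} = g i + sum g ({..<length lam} - {i})"
      using i by (intro sum.remove) auto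
    also have "sum g ({..<length lam} - {i}) = g (Suc i) + sum g A"
      unfolding A_def using i by (intro sum.remove) auto
    finally show ?thesis .
  qed
  have "meas c (swap_at i lam) = sum f' {..<length lam}" unfolding meas_def f'_def swap_len by simp
  also have "\<dots> = f' i + (f' (Suc i) + sum f A)" using s1 eqA by simp
  also have "\<dots> = f i + (f (Suc i) + sum f A) - (lam ! Suc i - lam ! i)"
    unfolding f_def f'_def using swap_nth[OF i, of i] swap_nth[OF i, of "Suc i"] i
    by (simp add: algebra_simps)
  also have "f i + (f (Suc i) + sum f A) = meas c lam" unfolding meas_def using s1[of f] f_def by simp
  finally show ?thesis .
qed

lemma meas_nonneg: "(\<forall>x\<in>set lam. c \<le> x) \<Longrightarrow> meas c lam \<ge> 0"
  unfolding meas_def by (intro sum_nonneg) auto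

lemma swap_set: "Suc i < length lam \<Longrightarrow> mset (swap_at i lam) = mset lam"
  unfolding swap_at_def using mset_swap[of "Suc i" lam i] by simp

lemma swap_intertwined:
  assumes r: "2 \<le> r" and k: "1 \<le> k" and lam: "lam \<in> B n k r" and i: "Suc i < length lam"
    and asc: "lam ! i < lam ! Suc i"
  shows "intertwined k r lam (swap_at i lam)"
proof -
  have "swap_at i lam ! i \<noteq> lam ! i" using swap_nth[OF i, of i] i asc by simp
  then have "swap_at i lam \<noteq> lam" by auto
  then have "intertwin_step k r lam (swap_at i lam)"
    using swap_step[OF i _ not_blocked[OF r k lam i asc]] by simp
  then show ?thesis unfolding intertwined_def by blast
qed

lemma sort_B:
  assumes r: "2 \<le> r" and k: "1 \<le> k" and lam: "lam \<in> B n k r"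
  shows "\<exists>v. dominant v \<and> mset v = mset lam \<and> v \<in> B n k r \<and> intertwined k r lam v"
proof (cases "lam = []")
  case True
  then show ?thesis using lam unfolding dominant_def intertwined_def by auto
next
  case False
  define c where "c = Min (set lam)"
  have c: "\<forall>x\<in>set lam. c \<le> x" unfolding c_def by simp
  have main: "\<And>lam'. nat (meas c lam') = N \<Longrightarrow> lam' \<in> B n k r \<Longrightarrow> mset lam' = mset lam \<Longrightarrow>
    \<exists>v. dominant v \<and> mset v = mset lam' \<and> v \<in> B n k r \<and> intertwined k r lam' v" for N
  proof (induction N rule: less_induct)
    case (less N lam')
    show ?case
    proof (cases "dominant lam'")
      case True
      then show ?thesis using less.prems unfolding intertwined_def by auto
    next
      case False
      then obtain i where i: "Suc i < length lam'" "lam' ! i < lam' ! Suc i"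
        unfolding dominant_def by (auto simp: not_le)
      let ?s = "swap_at i lam'"
      have sB: "?s \<in> B n k r" using swap_B[OF r less.prems(2) i] .
      have sm: "mset ?s = mset lam" using swap_set[OF i(1)] less.prems by simp
      have c': "\<forall>x\<in>set lam'. c \<le> x" using c less.prems(3) by (metis set_mset_mset)
      have cs: "\<forall>x\<in>set ?s. c \<le> x" using c sm by (metis set_mset_mset)
      have "nat (meas c ?s) < N"
        using swap_measure[OF i(1), of c] meas_nonneg[OF cs] meas_nonneg[OF c'] less.prems(1) i(2) by simp
      from less.IH[OF this refl sB sm] obtain v where
        v: "dominant v" "mset v = mset ?s" "v \<in> B n k r" "intertwined k r ?s v" by blast
      have "intertwined k r lam' ?s" using swap_intertwined[OF r k less.prems(2) i] .
      then have "intertwined k r lam' v" using v(4) unfolding intertwined_def by (rule equivclp_trans)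
      then show ?thesis using v swap_set[OF i(1)] by auto
    qed
  qed
  show ?thesis using main[OF refl lam refl] .
qed


lemma omega_pow:
  "j \<le> length v \<Longrightarrow> (omega ^^ j) v = drop j v @ map (\<lambda>x. x + 1) (take j v)"
proof (induction j)
  case 0
  then show ?case by simp
next
  case (Suc j)
  then have j: "j < length v" by simp
  have ne: "drop j v \<noteq> []" using j by simp
  have "(omega ^^ Suc j) v = omega (drop j v @ map (\<lambda>x. x + 1) (take j v))"
    using Suc by simp
  also have "\<dots> = drop (Suc j) v @ map (\<lambda>x. x + 1) (take j v) @ [v ! j + 1]"
    unfolding omega_def using ne j by (simp add: hd_drop_conv_nth drop_Suc tl_drop)
  also have "\<dots> = drop (Suc j) v @ map (\<lambda>x. x + 1) (take (Suc j) v)"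
    using j by (simp add: take_Suc_conv_app_nth)
  finally show ?case .
qed

lemma omega_pow_int:
  "lam \<noteq> [] \<Longrightarrow> intertwined k r lam ((omega ^^ j) lam) \<and> (omega ^^ j) lam \<noteq> []"
proof (induction j)
  case 0
  then show ?case unfolding intertwined_def by simp
next
  case (Suc j)
  define X where "X = (omega ^^ j) lam"
  have a: "intertwined k r lam X" and ne: "X \<noteq> []" using Suc unfolding X_def by auto
  have st: "intertwin_step k r X (omega X)" using ne by (rule omega_step)
  have "(omega ^^ Suc j) lam = omega X" unfolding X_def by simp
  moreover have "omega X \<noteq> []" by (simp add: omega_def)
  ultimately show ?case using a st unfolding intertwined_def by (metis equivclp_trans r_into_equivclp)
qed

lemma omega_pow_B:
  assumes r: "2 \<le> r" and lam: "lam \<in> B n k r" "lam \<noteq> []"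
  shows "(omega ^^ j) lam \<in> B n k r"
proof (induction j)
  case 0
  then show ?case using lam by simp
next
  case (Suc j)
  have "(omega ^^ j) lam \<noteq> []" using omega_pow_int[OF lam(2)] by blast
  then show ?case using omega_B[OF r Suc] by simp
qed

lemma translate1: "v \<noteq> [] \<Longrightarrow> intertwined k r v (map (\<lambda>x. x + 1) v)"
  using omega_pow_int[of v k r "length v"] omega_pow[of "length v" v] by simp

lemma translate_nat: "v \<noteq> [] \<Longrightarrow> intertwined k r v (map (\<lambda>x. x + int t) v)"
proof (induction t)
  case 0
  then show ?case unfolding intertwined_def by simp
next
  case (Suc t)
  define W where "W = map (\<lambda>x. x + int t) v"
  have "intertwined k r W (map (\<lambda>x. x + 1) W)"
    by (rule translate1) (simp add: W_def Suc.prems)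
  moreover have "map (\<lambda>x. x + 1) W = map (\<lambda>x. x + int (Suc t)) v" unfolding W_def by simp
  moreover have "intertwined k r v W" using Suc unfolding W_def by simp
  ultimately show ?case unfolding intertwined_def by (metis equivclp_trans)
qed

lemma translate: 
  assumes ne: "v \<noteq> []" shows "intertwined k r v (map (\<lambda>x. x + c) v)"
proof (cases "c \<ge> 0")
  case True
  then show ?thesis using translate_nat[OF ne, of k r "nat c"] by simp
next
  case False
  define W where "W = map (\<lambda>x. x + c) v"
  have "intertwined k r W (map (\<lambda>x. x + int (nat (- c))) W)"
    by (rule translate_nat) (simp add: W_def ne)
  moreover have "map (\<lambda>x. x + int (nat (- c))) W = v" unfolding W_def using False
    by (intro nth_equalityI) auto
  ultimately show ?thesis unfolding intertwined_def W_def by (metis equivclp_sym)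
qed

lemma dom_unique:
  assumes "dominant u" "dominant v" "mset u = mset v" shows "u = v"
proof -
  have s: "sorted (rev w)" if "dominant w" for w
  proof -
    have "sorted_wrt (\<lambda>x y. y \<le> x) w"
      using that unfolding dominant_def
      by (subst sorted_wrt_iff_nth_Suc_transp) (auto simp: transp_def)
    then show ?thesis by (simp add: sorted_wrt_rev)
  qed
  have "sort (rev v) = rev u" using assms by (intro properties_for_sort) (auto simp: s)
  moreover have "sort (rev v) = rev v" using s[OF assms(2)] by (simp add: sorted_sort_id)
  ultimately show ?thesis by simp
qed

definition add1 :: "nat \<Rightarrow> int list \<Rightarrow> int list" where
  "add1 j v = map (\<lambda>x. x + 1) (take (Suc j) v) @ drop (Suc j) v"

lemma add1_len: "Suc j \<le> length v \<Longrightarrow> length (add1 j v) = length v"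
  unfolding add1_def by simp

lemma add1_nth: "Suc j \<le> length v \<Longrightarrow> x < length v \<Longrightarrow> add1 j v ! x = v ! x + (if x \<le> j then 1 else 0)"
  unfolding add1_def by (auto simp: nth_append min_def)

lemma add1_step:
  assumes r: "2 \<le> r" and k: "1 \<le> k" and v: "v \<in> B n k r" "dominant v" and j: "Suc j < length v"
  shows "add1 j v \<in> B n k r \<and> intertwined k r v (add1 j v) \<and> dominant (add1 j v)"
proof -
  have ne: "v \<noteq> []" using j by auto
  let ?w = "(omega ^^ Suc j) v"
  have wB: "?w \<in> B n k r" using omega_pow_B[OF r v(1) ne] .
  have vw: "intertwined k r v ?w" using omega_pow_int[OF ne] by blast
  obtain u where u: "dominant u" "mset u = mset ?w" "u \<in> B n k r" "intertwined k r ?w u"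
    using sort_B[OF r k wB] by blast
  have ms: "mset ?w = mset (add1 j v)" using omega_pow[of "Suc j" v] j unfolding add1_def by simp
  have da: "dominant (add1 j v)" unfolding dominant_def
  proof (intro allI impI)
    fix x assume x: "Suc x < length (add1 j v)"
    then show "add1 j v ! Suc x \<le> add1 j v ! x"
      using add1_nth[of j v x] add1_nth[of j v "Suc x"] add1_len[of j v] j v(2) unfolding dominant_def
      by auto
  qed
  have "u = add1 j v" using dom_unique[OF u(1) da] u(2) ms by simp
  then show ?thesis using u vw da unfolding intertwined_def by (metis equivclp_trans)
qed


definition gap :: "int list \<Rightarrow> nat \<Rightarrow> int" where
  "gap v j = v ! j - v ! Suc j"

definition cn :: "int \<Rightarrow> nat \<Rightarrow> int list" where
  "cn G n = map (\<lambda>x. int (n - 1 - x) * G) [0..<n]"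

definition phi :: "int \<Rightarrow> int list \<Rightarrow> nat" where
  "phi G v = (\<Sum>j<length v - 1. nat (G - gap v j))"

lemma all_gaps_eq:
  assumes len: "length v = n" and g: "\<forall>j. Suc j < n \<longrightarrow> gap v j = G"
  shows "d < n \<Longrightarrow> v ! (n - 1 - d) = v ! (n - 1) + int d * G"
proof (induction d)
  case 0
  then show ?case by simp
next
  case (Suc d)
  have e: "Suc (n - 1 - Suc d) = n - 1 - d" using Suc.prems by simp
  have "gap v (n - 1 - Suc d) = G" using g Suc.prems by auto
  then have "v ! (n - 1 - Suc d) = v ! (n - 1 - d) + G" unfolding gap_def e by simp
  then show ?case using Suc by (simp add: algebra_simps)
qed

lemma canon:
  assumes r: "2 \<le> r" and k: "1 \<le> k" and n: "n > 0"
  shows "\<And>v. phi G v = N \<Longrightarrow> v \<in> B n k r \<Longrightarrow> dominant v \<Longrightarrow> length v = n \<Longrightarrow>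
     \<forall>j. Suc j < n \<longrightarrow> gap v j \<le> G \<Longrightarrow> intertwined k r v (cn G n)"
proof (induction N rule: less_induct)
  case (less N v)
  show ?case
  proof (cases "\<exists>j. Suc j < n \<and> gap v j < G")
    case True
    then obtain j where j: "Suc j < n" "gap v j < G" by blast
    let ?v = "add1 j v"
    have st: "?v \<in> B n k r \<and> intertwined k r v ?v \<and> dominant ?v"
      using add1_step[OF r k less.prems(2) less.prems(3)] j less.prems(4) by simp
    have len: "length ?v = n" using add1_len[of j v] j less.prems(4) by simp
    have gp: "gap ?v j' = gap v j' + (if j' = j then 1 else 0)" if "Suc j' < n" for j'
      using add1_nth[of j v j'] add1_nth[of j v "Suc j'"] that j less.prems(4) unfolding gap_def
      by auto
    have gle: "\<forall>j'. Suc j' < n \<longrightarrow> gap ?v j' \<le> G" using gp less.prems(5) j by auto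
    have "phi G ?v < phi G v"
      unfolding phi_def len less.prems(4)
    proof (rule sum_strict_mono_ex1)
      show "finite {..<n - 1}" by simp
      show "\<forall>x\<in>{..<n - 1}. nat (G - gap ?v x) \<le> nat (G - gap v x)" using gp by auto
      show "\<exists>a\<in>{..<n - 1}. nat (G - gap ?v a) < nat (G - gap v a)" using gp[of j] j
        by (intro bexI[of _ j]) auto
    qed
    then have "intertwined k r ?v (cn G n)"
      using less.IH[OF _ refl] st len gle less.prems(1) by blast
    then show ?thesis using st unfolding intertwined_def by (metis equivclp_trans)
  next
    case False
    then have g: "\<forall>j. Suc j < n \<longrightarrow> gap v j = G" using less.prems(5) by force
    have "map (\<lambda>x. x + (- (v ! (n - 1)))) v = cn G n"
    proof (rule nth_equalityI)
      show "length (map (\<lambda>x. x + - v ! (n - 1)) v) = length (cn G n)"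
        unfolding cn_def using less.prems(4) by simp
      fix x assume x: "x < length (map (\<lambda>x. x + - v ! (n - 1)) v)"
      then have xn: "x < n" using less.prems(4) by simp
      have "v ! (n - 1 - (n - 1 - x)) = v ! (n - 1) + int (n - 1 - x) * G"
        using all_gaps_eq[OF less.prems(4) g, of "n - 1 - x"] xn by simp
      moreover have "n - 1 - (n - 1 - x) = x" using xn by simp
      ultimately show "map (\<lambda>x. x + - v ! (n - 1)) v ! x = cn G n ! x"
        unfolding cn_def using xn less.prems(4) by simp
    qed
    moreover have "v \<noteq> []" using n less.prems(4) by auto
    ultimately show ?thesis using translate by metis
  qed
qed

theorem lemma4p5:
  fixes n k r :: nat and lam mu :: "int list"
  assumes "1 \<le> k" and "k \<le> n - 1" and "2 \<le> r"
    and "lam \<in> B n k r" and "mu \<in> B n k r"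
  shows "intertwined k r lam mu"
proof -
  have k: "1 \<le> k" and r: "2 \<le> r" using assms by auto
  have n: "n > 0" using assms by simp
  obtain v where v: "dominant v" "mset v = mset lam" "v \<in> B n k r" "intertwined k r lam v"
    using sort_B[OF r k assms(4)] by blast
  obtain w where w: "dominant w" "mset w = mset mu" "w \<in> B n k r" "intertwined k r mu w"
    using sort_B[OF r k assms(5)] by blast
  have lv: "length v = n" and lw: "length w = n" using v(3) w(3) unfolding B_def by auto
  define G where "G = max (Max (gap v ` {..<n})) (Max (gap w ` {..<n}))"
  have gv: "\<forall>j. Suc j < n \<longrightarrow> gap v j \<le> G"
    unfolding G_def by (auto intro!: max.coboundedI1 Max_ge)
  have gw: "\<forall>j. Suc j < n \<longrightarrow> gap w j \<le> G"
    unfolding G_def by (auto intro!: max.coboundedI2 Max_ge)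
  have "intertwined k r v (cn G n)" using canon[OF r k n refl v(3) v(1) lv gv] .
  moreover have "intertwined k r w (cn G n)" using canon[OF r k n refl w(3) w(1) lw gw] .
  ultimately show ?thesis using v(4) w(4) unfolding intertwined_def
    by (metis equivclp_trans equivclp_sym)
qed

end
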